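(* Let $G_{\|v_0}$ be a well-initialized prefix-independent game with steady negotiation, let $\epsilon\ge0$, and let $\lambda$ be an $\epsilon$-fixed point of the negotiation function. Then for every $\lambda$-consistent play $\xi$ starting in $v_0$, there exists an $\epsilon$-SPE $\bar\sigma$ in $G_{\|v_0}$ such that $\langle\bar\sigma\rangle_{v_0}=\xi$.
   Context: A game is a tuple $G=(\Pi,V,(V_i)_{i\in\Pi},E,\mu)$ where $\Pi$ is a finite set of players, $(V,E)$ is a finite directed graph in which every vertex has at least one outgoing edge, $(V_i)_{i\in\Pi}$ is a partition of $V$, and $\mu:V^\omega\to\mathbb{R}^\Pi$ is the outcome function. Plays, histories, strategies, profiles, compatibility and $\langle\bar\sigma\rangle_v$ are as usual; $G_{\|v_0}$ is $G$ initialized at $v_0$ and is well-initialized if every vertex is reachable from $v_0$; $-i$ denotes $\Pi\setminus\{i\}$; $\bar\sigma_{\|hv}$ is the profile in $G_{\|v}$ with $\sigma_{j\|hv}(h')=\sigma_j(hh')$. $G$ is prefix-independent if $\mu(h\rho)=\mu(\rho)$ for every history $h$ and play $\rho$. A profile $\bar\sigma$ in $G_{\|v_0}$ is an $\epsilon$-SPE if for every history $hv$ of $G_{\|v_0}$, every player $i$ and strategy $\sigma'_i$, $\mu_i(h\langle\bar\sigma_{-i\|hv},\sigma'_{i\|hv}\rangle_v)\le\mu_i(h\langle\bar\sigma_{\|hv}\rangle_v)+\epsilon$. A requirement is a map $\lambda:V\to\mathbb{R}\cup\{\pm\infty\}$. A play $\rho$ is $\lambda$-consistent if for every $i\in\Pi$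 and $n$ with $\rho_n\in V_i$, $\mu_i(\rho_n\rho_{n+1}\cdots)\ge\lambda(\rho_n)$. $\lambda\mathrm{Rat}_i(v)$ is the set of profiles $\bar\sigma_{-i}$ in $G_{\|v}$ for which there exists $\sigma_i$ such that for every history $hw$ from $v$ compatible with $\bar\sigma_{-i}$, $\langle\bar\sigma_{\|hw}\rangle_w$ is $\lambda$-consistent. For $i\in\Pi$, $v\in V_i$: $\mathrm{nego}(\lambda)(v)=\inf_{\bar\sigma_{-i}\in\lambda\mathrm{Rat}_i(v)}\sup_{\sigma_i}\mu_i(\langle\bar\sigma_{-i},\sigma_i\rangle_v)$, $\inf\emptyset=+\infty$. $\lambda$ is an $\epsilon$-fixed point of $\mathrm{nego}$ if $\lambda(v)-\epsilon\le\mathrm{nego}(\lambda)(v)\le\lambda(v)+\epsilon$ for all $v$ (with $\pm\infty\pm\epsilon=\pm\infty$). $G$ is with steady negotiation if for every player $i$, vertex $v$ and requirement $\lambda$, the set $\{\sup_{\sigma_i}\mu_i(\langle\bar\sigma_{-i},\sigma_i\rangle_v)\mid\bar\sigma_{-i}\in\lambda\mathrm{Rat}_i(v)\}$ is empty or has a minimum. *)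

theory Defs
  imports Complex_Main "HOL-Library.Extended_Real"
begin

text \<open>Conventions: the set of players is the finite type 'p (Pi = UNIV), the set of
vertices is the finite type 'v (V = UNIV), the partition (V_i) is given by an owner
function owner :: 'v => 'p (V_i = owner -` {i}), E is the edge relation, and
mu :: (nat => 'v) => 'p => real is the outcome function (mu rho i = mu_i(rho)).
Plays are infinite sequences, histories are nonempty finite lists.\<close>

definition game_edges :: "('v \<times> 'v) set \<Rightarrow> bool" where
  "game_edges E = (\<forall>v. \<exists>w. (v, w) \<in> E)"

definition is_play :: "('v \<times> 'v) set \<Rightarrow> (nat \<Rightarrow> 'v) \<Rightarrow> bool" where
  "is_play E \<rho> = (\<forall>n. (\<rho> n, \<rho> (Suc n)) \<in> E)"

definition is_hist :: "('v \<times> 'v) set \<Rightarrow> 'v list \<Rightarrow> bool" where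
  "is_hist E h = (h \<noteq> [] \<and> (\<forall>k. Suc k < length h \<longrightarrow> (h ! k, h ! Suc k) \<in> E))"

definition is_strategy :: "('v \<times> 'v) set \<Rightarrow> ('v \<Rightarrow> 'p) \<Rightarrow> 'p \<Rightarrow> ('v list \<Rightarrow> 'v) \<Rightarrow> bool" where
  "is_strategy E owner i s = (\<forall>h. h \<noteq> [] \<and> owner (last h) = i \<longrightarrow> (last h, s h) \<in> E)"

definition is_profile :: "('v \<times> 'v) set \<Rightarrow> ('v \<Rightarrow> 'p) \<Rightarrow> ('p \<Rightarrow> 'v list \<Rightarrow> 'v) \<Rightarrow> bool" where
  "is_profile E owner \<sigma> = (\<forall>i. is_strategy E owner i (\<sigma> i))"

fun out_hist :: "('v \<Rightarrow> 'p) \<Rightarrow> ('p \<Rightarrow> 'v list \<Rightarrow> 'v) \<Rightarrow> 'v \<Rightarrow> nat \<Rightarrow> 'v list" where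
  "out_hist owner \<sigma> v 0 = [v]"
| "out_hist owner \<sigma> v (Suc n) =
     (let h = out_hist owner \<sigma> v n in h @ [\<sigma> (owner (last h)) h])"

definition outcome :: "('v \<Rightarrow> 'p) \<Rightarrow> ('p \<Rightarrow> 'v list \<Rightarrow> 'v) \<Rightarrow> 'v \<Rightarrow> nat \<Rightarrow> 'v" where
  "outcome owner \<sigma> v = (\<lambda>n. last (out_hist owner \<sigma> v n))"

definition restr :: "('p \<Rightarrow> 'v list \<Rightarrow> 'v) \<Rightarrow> 'v list \<Rightarrow> ('p \<Rightarrow> 'v list \<Rightarrow> 'v)" where
  "restr \<sigma> h = (\<lambda>j h'. \<sigma> j (h @ h'))"

definition conc :: "'v list \<Rightarrow> (nat \<Rightarrow> 'v) \<Rightarrow> nat \<Rightarrow> 'v" where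
  "conc h \<rho> = (\<lambda>n. if n < length h then h ! n else \<rho> (n - length h))"

definition suffix :: "(nat \<Rightarrow> 'v) \<Rightarrow> nat \<Rightarrow> nat \<Rightarrow> 'v" where
  "suffix \<rho> n = (\<lambda>k. \<rho> (n + k))"

definition prefix_independent :: "('v \<times> 'v) set \<Rightarrow> ((nat \<Rightarrow> 'v) \<Rightarrow> 'p \<Rightarrow> real) \<Rightarrow> bool" where
  "prefix_independent E \<mu> =
     (\<forall>h \<rho>. is_hist E h \<and> is_play E \<rho> \<and> (last h, \<rho> 0) \<in> E \<longrightarrow> \<mu> (conc h \<rho>) = \<mu> \<rho>)"

definition well_initialized :: "('v \<times> 'v) set \<Rightarrow> 'v \<Rightarrow> bool" where
  "well_initialized E v0 = (\<forall>v. (v0, v) \<in> E\<^sup>*)"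

definition eps_SPE ::
  "('v \<times> 'v) set \<Rightarrow> ('v \<Rightarrow> 'p) \<Rightarrow> ((nat \<Rightarrow> 'v) \<Rightarrow> 'p \<Rightarrow> real) \<Rightarrow> real \<Rightarrow> 'v
     \<Rightarrow> ('p \<Rightarrow> 'v list \<Rightarrow> 'v) \<Rightarrow> bool" where
  "eps_SPE E owner \<mu> \<epsilon> v0 \<sigma> =
     (is_profile E owner \<sigma> \<and>
      (\<forall>h v i \<sigma>'. is_hist E (h @ [v]) \<and> hd (h @ [v]) = v0 \<and> is_strategy E owner i \<sigma>' \<longrightarrow>
         \<mu> (conc h (outcome owner (restr (\<sigma>(i := \<sigma>')) h) v)) i
           \<le> \<mu> (conc h (outcome owner (restr \<sigma> h) v)) i + \<epsilon>))"

definition lam_consistent ::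
  "('v \<Rightarrow> 'p) \<Rightarrow> ((nat \<Rightarrow> 'v) \<Rightarrow> 'p \<Rightarrow> real) \<Rightarrow> ('v \<Rightarrow> ereal) \<Rightarrow> (nat \<Rightarrow> 'v) \<Rightarrow> bool" where
  "lam_consistent owner \<mu> lam \<rho> = (\<forall>n. ereal (\<mu> (suffix \<rho> n) (owner (\<rho> n))) \<ge> lam (\<rho> n))"

definition compatible_minus ::
  "('v \<Rightarrow> 'p) \<Rightarrow> 'p \<Rightarrow> ('p \<Rightarrow> 'v list \<Rightarrow> 'v) \<Rightarrow> 'v list \<Rightarrow> bool" where
  "compatible_minus owner i \<tau> hw =
     (\<forall>k. Suc k < length hw \<longrightarrow> owner (hw ! k) \<noteq> i \<longrightarrow>
          hw ! Suc k = \<tau> (owner (hw ! k)) (take (Suc k) hw))"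

text \<open>lambda Rat_i(v). A profile sigma_{-i} is represented by a full profile whose
i-component is ignored.\<close>
definition lamRat ::
  "('v \<times> 'v) set \<Rightarrow> ('v \<Rightarrow> 'p) \<Rightarrow> ((nat \<Rightarrow> 'v) \<Rightarrow> 'p \<Rightarrow> real) \<Rightarrow> ('v \<Rightarrow> ereal) \<Rightarrow> 'p \<Rightarrow> 'v
     \<Rightarrow> ('p \<Rightarrow> 'v list \<Rightarrow> 'v) set" where
  "lamRat E owner \<mu> lam i v =
     {\<tau>. (\<forall>j. j \<noteq> i \<longrightarrow> is_strategy E owner j (\<tau> j)) \<and>
          (\<exists>\<sigma>i. is_strategy E owner i \<sigma>i \<and>
             (\<forall>h w. is_hist E (h @ [w]) \<and> hd (h @ [w]) = v \<and> compatible_minus owner i \<tau> (h @ [w])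
                \<longrightarrow> lam_consistent owner \<mu> lam (outcome owner (restr (\<tau>(i := \<sigma>i)) h) w)))}"

definition best_value ::
  "('v \<times> 'v) set \<Rightarrow> ('v \<Rightarrow> 'p) \<Rightarrow> ((nat \<Rightarrow> 'v) \<Rightarrow> 'p \<Rightarrow> real) \<Rightarrow> 'p \<Rightarrow> 'v
     \<Rightarrow> ('p \<Rightarrow> 'v list \<Rightarrow> 'v) \<Rightarrow> ereal" where
  "best_value E owner \<mu> i v \<tau> =
     (SUP \<sigma>i \<in> {s. is_strategy E owner i s}. ereal (\<mu> (outcome owner (\<tau>(i := \<sigma>i)) v) i))"

definition nego ::
  "('v \<times> 'v) set \<Rightarrow> ('v \<Rightarrow> 'p) \<Rightarrow> ((nat \<Rightarrow> 'v) \<Rightarrow> 'p \<Rightarrow> real) \<Rightarrow> ('v \<Rightarrow> ereal) \<Rightarrow> 'v \<Rightarrow> ereal" where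
  "nego E owner \<mu> lam v =
     (INF \<tau> \<in> lamRat E owner \<mu> lam (owner v) v. best_value E owner \<mu> (owner v) v \<tau>)"

definition eps_fixed_point ::
  "('v \<times> 'v) set \<Rightarrow> ('v \<Rightarrow> 'p) \<Rightarrow> ((nat \<Rightarrow> 'v) \<Rightarrow> 'p \<Rightarrow> real) \<Rightarrow> real \<Rightarrow> ('v \<Rightarrow> ereal) \<Rightarrow> bool" where
  "eps_fixed_point E owner \<mu> \<epsilon> lam =
     (\<forall>v. lam v - ereal \<epsilon> \<le> nego E owner \<mu> lam v \<and> nego E owner \<mu> lam v \<le> lam v + ereal \<epsilon>)"

definition steady_negotiation ::
  "('v \<times> 'v) set \<Rightarrow> ('v \<Rightarrow> 'p) \<Rightarrow> ((nat \<Rightarrow> 'v) \<Rightarrow> 'p \<Rightarrow> real) \<Rightarrow> bool" where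
  "steady_negotiation E owner \<mu> =
     (\<forall>i v lam. let S = best_value E owner \<mu> i v ` lamRat E owner \<mu> lam i v
              in S = {} \<or> (\<exists>m\<in>S. \<forall>x\<in>S. m \<le> x))"

end

theory Submission
  imports Defs
begin


definition pref :: "(nat \<Rightarrow> 'v) \<Rightarrow> nat \<Rightarrow> 'v list" where
  "pref \<pi> n = map \<pi> [0..<Suc n]"

lemma pref_length[simp]: "length (pref \<pi> n) = Suc n" by (simp add: pref_def)
lemma pref_ne[simp]: "pref \<pi> n \<noteq> []" by (simp add: pref_def)
lemma pref_nth[simp]: "i \<le> n \<Longrightarrow> pref \<pi> n ! i = \<pi> i"
  by (simp add: pref_def nth_append del: upt_Suc)
lemma last_pref[simp]: "last (pref \<pi> n) = \<pi> n" by (simp add: pref_def)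
lemma pref_Suc: "pref \<pi> (Suc n) = pref \<pi> n @ [\<pi> (Suc n)]" by (simp add: pref_def)
lemma pref_0[simp]: "pref \<pi> 0 = [\<pi> 0]" by (simp add: pref_def)
lemma hd_pref[simp]: "hd (pref \<pi> n) = \<pi> 0" by (simp add: pref_def hd_map del: upt_Suc)
lemma take_pref: "i \<le> n \<Longrightarrow> take (Suc i) (pref \<pi> n) = pref \<pi> i"
  by (simp add: pref_def take_map del: upt_Suc)
lemma pref_cong: "(\<forall>i\<le>n. f i = g i) \<Longrightarrow> pref f n = pref g n"
  by (simp add: pref_def del: upt_Suc)
lemma drop_pref: "k \<le> n \<Longrightarrow> drop k (pref \<pi> n) = pref (suffix \<pi> k) (n - k)"
  by (rule nth_equalityI) (auto simp: suffix_def)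

lemma pref_split: "pref \<rho> (Suc a + n) = pref \<rho> a @ pref (suffix \<rho> (Suc a)) n"
  apply (rule nth_equalityI)
   apply simp
  apply (auto simp: nth_append suffix_def)
  done

lemma out_hist_pref: "out_hist owner Q w n = pref (outcome owner Q w) n"
proof (induction n)
  case 0 then show ?case by (simp add: outcome_def)
next
  case (Suc n)
  have "outcome owner Q w (Suc n) = Q (owner (last (out_hist owner Q w n))) (out_hist owner Q w n)"
    by (simp add: outcome_def Let_def)
  then show ?case by (simp add: pref_Suc Let_def Suc.IH)
qed


lemma outcome_0[simp]: "outcome owner Q w 0 = w"
  by (simp add: outcome_def)

lemma outcome_Suc: "outcome owner Q w (Suc n) = Q (owner (outcome owner Q w n)) (pref (outcome owner Q w) n)"
proof -
  have "outcome owner Q w (Suc n) = Q (owner (last (out_hist owner Q w n))) (out_hist owner Q w n)"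
    by (simp add: outcome_def Let_def)
  then show ?thesis by (simp add: out_hist_pref)
qed

lemma outcome_unique:
  assumes "\<rho> 0 = w" and "\<And>n. \<rho> (Suc n) = Q (owner (\<rho> n)) (pref \<rho> n)"
  shows "outcome owner Q w = \<rho>"
proof -
  have "\<forall>i\<le>n. outcome owner Q w i = \<rho> i" for n
  proof (induction n)
    case 0 then show ?case using assms by simp
  next
    case (Suc n)
    have "pref (outcome owner Q w) n = pref \<rho> n" using Suc by (intro pref_cong) auto
    then have "outcome owner Q w (Suc n) = \<rho> (Suc n)"
      using Suc by (simp add: outcome_Suc assms(2))
    then show ?case using Suc le_Suc_eq by auto
  qed
  then show ?thesis by auto
qed

lemma hist_pref: "is_play E \<rho> \<Longrightarrow> is_hist E (pref \<rho> n)"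
  by (auto simp: is_hist_def is_play_def)

lemma play_suffix: "is_play E \<rho> \<Longrightarrow> is_play E (suffix \<rho> k)"
  by (simp add: is_play_def suffix_def)

lemma suffix_suffix[simp]: "suffix (suffix \<rho> a) b = suffix \<rho> (a + b)"
  by (simp add: suffix_def add.assoc)

lemma suffix_0[simp]: "suffix \<rho> 0 = \<rho>"
  by (simp add: suffix_def)

lemma suffix_app[simp]: "suffix \<rho> a b = \<rho> (a + b)"
  by (simp add: suffix_def)

lemma PI_suffix:
  assumes pi: "prefix_independent E \<mu>" and pl: "is_play E \<pi>"
  shows "\<mu> (suffix \<pi> n) = \<mu> \<pi>"
proof (cases n)
  case 0 then show ?thesis by simp
next
  case (Suc m)
  have h: "is_hist E (pref \<pi> m)" using pl by (rule hist_pref)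
  have e: "(last (pref \<pi> m), suffix \<pi> n 0) \<in> E" using pl Suc by (simp add: is_play_def)
  have c: "conc (pref \<pi> m) (suffix \<pi> n) = \<pi>"
    using Suc by (auto simp: conc_def)
  show ?thesis using pi h e play_suffix[OF pl] c unfolding prefix_independent_def
    by metis
qed

lemma pref_conc: "pref (conc h \<rho>) (length h + n) = h @ pref \<rho> n"
  by (rule nth_equalityI) (auto simp: conc_def nth_append)




lemma conc_lt: "i < length h \<Longrightarrow> conc h \<rho> i = h ! i" by (simp add: conc_def)
lemma conc_ge: "conc h \<rho> (length h + t) = \<rho> t" by (simp add: conc_def)

lemma conc_Suc:
  assumes "n \<ge> length h"
  shows "conc h (outcome owner (restr Q h) w) (Suc n) = Q (owner (conc h (outcome owner (restr Q h) w) n)) (pref (conc h (outcome owner (restr Q h) w)) n)"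
proof -
  let ?\<rho> = "outcome owner (restr Q h) w"
  obtain t where t: "n = length h + t" using assms le_Suc_ex by blast
  have "conc h ?\<rho> (Suc n) = ?\<rho> (Suc t)" using conc_ge[of h ?\<rho> "Suc t"] t by simp
  also have "\<dots> = Q (owner (?\<rho> t)) (h @ pref ?\<rho> t)"
    by (simp add: outcome_Suc restr_def)
  also have "h @ pref ?\<rho> t = pref (conc h ?\<rho>) n" using t pref_conc by metis
  also have "?\<rho> t = conc h ?\<rho> n" using t conc_ge by metis
  finally show ?thesis .
qed

lemma conc_play:
  assumes prof: "is_profile E owner Q" and hist: "is_hist E (h @ [w])"
  shows "is_play E (conc h (outcome owner (restr Q h) w))"
  unfolding is_play_def
proof
  fix n
  let ?\<pi> = "conc h (outcome owner (restr Q h) w)"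
  show "(?\<pi> n, ?\<pi> (Suc n)) \<in> E"
  proof (cases "Suc n < length h")
    case True
    have "((h@[w])!n, (h@[w])!Suc n) \<in> E" using hist True unfolding is_hist_def by simp
    then show ?thesis using True conc_lt[of n h] conc_lt[of "Suc n" h] by (simp add: nth_append)
  next
    case False
    show ?thesis
    proof (cases "Suc n = length h")
      case True
      have "((h@[w])!n, (h@[w])!Suc n) \<in> E" using hist True unfolding is_hist_def
        by (metis length_append_singleton lessI)
      moreover have "?\<pi> (Suc n) = w" using True conc_ge[of h _ 0] by (metis add_0_right outcome_0)
      ultimately show ?thesis using True conc_lt[of n h] by (simp add: nth_append)
    next
      case False
      then have "n \<ge> length h" using \<open>\<not> Suc n < length h\<close> by simp
      then have eq: "?\<pi> (Suc n) = Q (owner (?\<pi> n)) (pref ?\<pi> n)" by (rule conc_Suc)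
      have "is_strategy E owner (owner (?\<pi> n)) (Q (owner (?\<pi> n)))"
        using prof by (simp add: is_profile_def)
      then have "pref ?\<pi> n \<noteq> [] \<and> owner (last (pref ?\<pi> n)) = owner (?\<pi> n) \<longrightarrow> (last (pref ?\<pi> n), Q (owner (?\<pi> n)) (pref ?\<pi> n)) \<in> E"
        unfolding is_strategy_def by (rule spec)
      then have "(last (pref ?\<pi> n), Q (owner (?\<pi> n)) (pref ?\<pi> n)) \<in> E" by simp
      then show ?thesis using eq by simp
    qed
  qed
qed

lemma profile_upd: "is_profile E owner Q \<Longrightarrow> is_strategy E owner j s \<Longrightarrow> is_profile E owner (Q(j := s))"
  by (simp add: is_profile_def)

lemma BV:
  assumes edges: "game_edges E" and pl: "is_play E \<rho>"
    and comp: "\<And>n. owner (\<rho> n) \<noteq> j \<Longrightarrow> \<rho> (Suc n) = Q (owner (\<rho> n)) (pref \<rho> n)"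
  shows "ereal (\<mu> \<rho> j) \<le> best_value E owner \<mu> j (\<rho> 0) Q"
proof -
  define s where "s g = (if g = pref \<rho> (length g - 1) then \<rho> (length g) else (SOME w. (last g, w) \<in> E))" for g
  have str: "is_strategy E owner j s"
    unfolding is_strategy_def
  proof (intro allI impI)
    fix g :: "'a list" assume g: "g \<noteq> [] \<and> owner (last g) = j"
    show "(last g, s g) \<in> E"
    proof (cases "g = pref \<rho> (length g - 1)")
      case True
      then have "last g = last (pref \<rho> (length g - 1))" by (rule arg_cong)
      then have "last g = \<rho> (length g - 1)" by simp
      moreover have "Suc (length g - 1) = length g" using g by simp
      moreover have "s g = \<rho> (length g)" unfolding s_def by (rule if_P[OF True])
      moreover have "(\<rho> (length g - 1), \<rho> (Suc (length g - 1))) \<in> E"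
        using pl unfolding is_play_def by blast
      ultimately show ?thesis by simp
    next
      case False
      then have "s g = (SOME w. (last g, w) \<in> E)" unfolding s_def by (rule if_not_P)
      moreover have "\<exists>w. (last g, w) \<in> E" using edges unfolding game_edges_def by blast
      ultimately show ?thesis by (metis someI_ex)
    qed
  qed
  have "outcome owner (Q(j := s)) (\<rho> 0) = \<rho>"
  proof (rule outcome_unique)
    fix n
    show "\<rho> (Suc n) = (Q(j := s)) (owner (\<rho> n)) (pref \<rho> n)"
      using comp[of n] by (auto simp: s_def)
  qed simp
  then show ?thesis unfolding best_value_def
    using str by (metis (mono_tags, lifting) SUP_upper mem_Collect_eq)
qed




datatype mode = Init | Pun nat

locale ctx =
  fixes E :: "('v::finite \<times> 'v) set" and owner :: "'v \<Rightarrow> 'p::finite"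
    and \<mu> :: "(nat \<Rightarrow> 'v) \<Rightarrow> 'p \<Rightarrow> real"
    and \<epsilon> :: real and lam :: "'v \<Rightarrow> ereal" and xi :: "nat \<Rightarrow> 'v" and v0 :: 'v
    and T :: "'v \<Rightarrow> 'p \<Rightarrow> 'v list \<Rightarrow> 'v" and dflt :: "'v list \<Rightarrow> 'v"
  assumes edges: "game_edges E"
    and pind: "prefix_independent E \<mu>"
    and eps0: "\<epsilon> \<ge> 0"
    and fp: "eps_fixed_point E owner \<mu> \<epsilon> lam"
    and xi_play: "is_play E xi" and xi0: "xi 0 = v0" and xi_cons: "lam_consistent owner \<mu> lam xi"
    and dflt_edge: "\<And>h. h \<noteq> [] \<Longrightarrow> (last h, dflt h) \<in> E"
    and T_strat: "\<And>u i. is_strategy E owner i (T u i)"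
    and T_cons: "\<And>u h w. lamRat E owner \<mu> lam (owner u) u \<noteq> {} \<Longrightarrow> is_hist E (h @ [w]) \<Longrightarrow>
        hd (h @ [w]) = u \<Longrightarrow> compatible_minus owner (owner u) (T u) (h @ [w]) \<Longrightarrow>
        lam_consistent owner \<mu> lam (outcome owner (restr (T u) h) w)"
    and T_best: "\<And>u. lamRat E owner \<mu> lam (owner u) u \<noteq> {} \<Longrightarrow>
        best_value E owner \<mu> (owner u) u (T u) \<le> lam u + ereal \<epsilon>"
begin

definition raw :: "mode \<Rightarrow> 'v list \<Rightarrow> 'v" where
  "raw s p = (case s of Init \<Rightarrow> xi (length p) | Pun k \<Rightarrow> T (p ! k) (owner (last p)) (drop k p))"
definition presc :: "mode \<Rightarrow> 'v list \<Rightarrow> 'v" where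
  "presc s p = (if (last p, raw s p) \<in> E then raw s p else dflt p)"
definition newst :: "mode \<Rightarrow> 'v list \<Rightarrow> mode" where
  "newst s p = (case s of Pun k \<Rightarrow> if owner (p ! k) = owner (last p) \<and> lam (p ! k) \<le> lam (last p)
      then Pun k else Pun (length p - 1) | Init \<Rightarrow> Pun (length p - 1))"
fun S :: "(nat \<Rightarrow> 'v) \<Rightarrow> nat \<Rightarrow> mode" where
  "S \<pi> 0 = Init"
| "S \<pi> (Suc n) = (if presc (S \<pi> n) (pref \<pi> n) = \<pi> (Suc n) then S \<pi> n else newst (S \<pi> n) (pref \<pi> n))"
declare S.simps(2)[simp del]
lemmas S_Suc = S.simps(2)

definition nxt :: "'v list \<Rightarrow> 'v" where "nxt h = presc (S (\<lambda>i. h ! i) (length h - 1)) h"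
definition sig :: "'p \<Rightarrow> 'v list \<Rightarrow> 'v" where "sig = (\<lambda>i. nxt)"

lemma presc_edge: "p \<noteq> [] \<Longrightarrow> (last p, presc s p) \<in> E"
  by (simp add: presc_def dflt_edge)

lemma presc_Pun: "k < length p \<Longrightarrow> presc (Pun k) p = T (p ! k) (owner (last p)) (drop k p)"
proof -
  assume k: "k < length p"
  have "drop k p \<noteq> []" using k by simp
  moreover have "last (drop k p) = last p" using k by simp
  ultimately have "(last p, T (p!k) (owner (last p)) (drop k p)) \<in> E"
    using T_strat[where u="p!k" and i="owner (last p)"] unfolding is_strategy_def by metis
  then show ?thesis by (simp add: presc_def raw_def)
qed

lemma S_agree: "(\<forall>i\<le>n. \<pi> i = \<pi>' i) \<Longrightarrow> S \<pi> n = S \<pi>' n"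
proof (induction n)
  case 0 then show ?case by simp
next
  case (Suc n)
  have a: "\<forall>i\<le>n. \<pi> i = \<pi>' i" using Suc.prems by simp
  have "S \<pi> n = S \<pi>' n" using Suc.IH[OF a] .
  moreover have "pref \<pi> n = pref \<pi>' n" using a by (rule pref_cong)
  moreover have "\<pi> (Suc n) = \<pi>' (Suc n)" using Suc.prems by simp
  ultimately show ?case by (simp add: S_Suc)
qed

lemma nxt_pref: "nxt (pref \<pi> n) = presc (S \<pi> n) (pref \<pi> n)"
proof -
  have "S (\<lambda>i. pref \<pi> n ! i) n = S \<pi> n" by (rule S_agree) simp
  then show ?thesis by (simp add: nxt_def)
qed

lemma sig_profile: "is_profile E owner sig"
  unfolding is_profile_def is_strategy_def sig_def nxt_def using presc_edge by blast

lemma newst_ne: "newst s p \<noteq> Init"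
  by (simp add: newst_def split: mode.split)

lemma S_change:
  assumes "S \<pi> (Suc n) \<noteq> S \<pi> n"
  shows "S \<pi> (Suc n) = Pun n \<and> presc (S \<pi> n) (pref \<pi> n) \<noteq> \<pi> (Suc n)"
proof -
  have nd: "presc (S \<pi> n) (pref \<pi> n) \<noteq> \<pi> (Suc n)" using assms by (auto simp: S_Suc)
  then have ns: "S \<pi> (Suc n) = newst (S \<pi> n) (pref \<pi> n)" by (simp add: S_Suc)
  have "S \<pi> (Suc n) = Pun n"
  proof (cases "S \<pi> n")
    case Init then show ?thesis using ns by (simp add: newst_def)
  next
    case (Pun k0)
    then show ?thesis using ns assms by (auto simp: newst_def split: if_splits)
  qed
  with nd show ?thesis by simp
qed

lemma S_Pun: "S \<pi> n = Pun k \<Longrightarrow> k < n \<and> (\<forall>n'. k < n' \<and> n' \<le> n \<longrightarrow> S \<pi> n' = Pun k)"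
proof (induction n)
  case 0 then show ?case by simp
next
  case (Suc n)
  show ?case
  proof (cases "S \<pi> (Suc n) = S \<pi> n")
    case True
    then have sn: "S \<pi> n = Pun k" using Suc.prems by simp
    from Suc.IH[OF sn] have k: "k < n" and r: "\<forall>n'. k < n' \<and> n' \<le> n \<longrightarrow> S \<pi> n' = Pun k" by auto
    have "\<forall>n'. k < n' \<and> n' \<le> Suc n \<longrightarrow> S \<pi> n' = Pun k"
    proof (intro allI impI)
      fix n' assume a: "k < n' \<and> n' \<le> Suc n"
      show "S \<pi> n' = Pun k"
      proof (cases "n' = Suc n")
        case True then show ?thesis using Suc.prems by simp
      next
        case False then show ?thesis using a r by simp
      qed
    qed
    then show ?thesis using k by simp
  next
    case False
    have kn: "k = n" using S_change[OF False] Suc.prems by simp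
    have "\<forall>n'. k < n' \<and> n' \<le> Suc n \<longrightarrow> S \<pi> n' = Pun k"
    proof (intro allI impI)
      fix n' assume "k < n' \<and> n' \<le> Suc n"
      then have "n' = Suc n" using kn by simp
      then show "S \<pi> n' = Pun k" using Suc.prems by simp
    qed
    then show ?thesis using kn by simp
  qed
qed

lemma S_Init: "is_play E \<pi> \<Longrightarrow> \<pi> 0 = v0 \<Longrightarrow> S \<pi> n = Init \<Longrightarrow> \<forall>i\<le>n. \<pi> i = xi i"
proof (induction n)
  case 0 then show ?case using xi0 by simp
next
  case (Suc n)
  have c: "presc (S \<pi> n) (pref \<pi> n) = \<pi> (Suc n)" and sn: "S \<pi> n = Init"
    using Suc.prems(3) newst_ne by (auto simp: S_Suc split: if_splits)
  have ih: "\<forall>i\<le>n. \<pi> i = xi i" using Suc.IH Suc.prems sn by simp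
  have "(last (pref \<pi> n), xi (Suc n)) \<in> E" using ih xi_play by (simp add: is_play_def)
  then have "presc Init (pref \<pi> n) = xi (Suc n)" by (simp add: presc_def raw_def)
  with c sn have "\<pi> (Suc n) = xi (Suc n)" by simp
  then show ?case using ih le_Suc_eq by auto
qed

lemma S_compat:
  assumes a: "S \<pi> n = Pun k" "k < n'" "n' < n" "owner (\<pi> n') \<noteq> owner (\<pi> k)"
  shows "\<pi> (Suc n') = T (\<pi> k) (owner (\<pi> n')) (drop k (pref \<pi> n'))"
proof -
  have s1: "S \<pi> n' = Pun k" and s2: "S \<pi> (Suc n') = Pun k" using S_Pun[OF a(1)] a(2,3) by auto
  have kl: "k \<le> n'" using a(2) by simp
  have pk: "presc (Pun k) (pref \<pi> n') = T (\<pi> k) (owner (\<pi> n')) (drop k (pref \<pi> n'))"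
    using a(2) kl by (simp add: presc_Pun)
  have "presc (S \<pi> n') (pref \<pi> n') = \<pi> (Suc n')"
  proof (rule ccontr)
    assume "\<not> ?thesis"
    then have "S \<pi> (Suc n') = newst (Pun k) (pref \<pi> n')" using s1 by (simp add: S_Suc)
    also have "\<dots> = Pun n'" using a(4) kl by (simp add: newst_def)
    finally show False using s2 a(2) by simp
  qed
  then show ?thesis using s1 pk by simp
qed

lemma nonempty: "lam u \<noteq> \<infinity> \<Longrightarrow> lamRat E owner \<mu> lam (owner u) u \<noteq> {}"
proof
  assume a: "lam u \<noteq> \<infinity>" and e: "lamRat E owner \<mu> lam (owner u) u = {}"
  have "nego E owner \<mu> lam u = \<infinity>" using e by (simp add: nego_def top_ereal_def)
  moreover have "nego E owner \<mu> lam u \<le> lam u + ereal \<epsilon>" using fp by (simp add: eps_fixed_point_def)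
  ultimately show False using a by (cases "lam u") auto
qed


lemma consistent_follow:
  assumes pl: "is_play E \<pi>" and p0: "\<pi> 0 = v0"
    and fol: "\<And>n. n \<ge> m \<Longrightarrow> \<pi> (Suc n) = presc (S \<pi> n) (pref \<pi> n)"
    and good: "\<And>k. S \<pi> m = Pun k \<Longrightarrow> lamRat E owner \<mu> lam (owner (\<pi> k)) (\<pi> k) \<noteq> {}"
    and nm: "n \<ge> m"
  shows "lam (\<pi> n) \<le> ereal (\<mu> (suffix \<pi> n) (owner (\<pi> n)))"
proof -
  have keep: "S \<pi> n' = S \<pi> m" if "n' \<ge> m" for n'
    using that
  proof (induction n' rule: dec_induct)
    case base then show ?case by simp
  next
    case (step n') then show ?case using fol[of n'] by (simp add: S_Suc)
  qed
  show ?thesis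
  proof (cases "S \<pi> m")
    case Init
    have "\<pi> i = xi i" for i
    proof -
      have "S \<pi> (max i m) = Init" using keep[of "max i m"] Init by simp
      from S_Init[OF pl p0 this] show ?thesis by simp
    qed
    then have "\<pi> = xi" by auto
    then show ?thesis using xi_cons by (simp add: lam_consistent_def)
  next
    case (Pun k)
    define u where "u = \<pi> k"
    define \<rho> where "\<rho> = suffix \<pi> k"
    define M where "M = m - k"
    have km: "k < m" using S_Pun[of \<pi> m k] Pun by simp
    then have M1: "Suc (M - 1) = M" by (simp add: M_def)
    have kM: "k + M = m" using km by (simp add: M_def)
    define h where "h = pref \<rho> (M - 1)"
    have hw: "pref \<rho> M = h @ [\<pi> m]"
    proof -
      have "pref \<rho> (Suc (M - 1)) = h @ [\<rho> (Suc (M - 1))]" by (simp add: h_def pref_Suc)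
      then show ?thesis using M1 kM by (simp add: \<rho>_def)
    qed
    have hist: "is_hist E (h @ [\<pi> m])"
      using hist_pref[OF play_suffix[OF pl], of k M] hw by (simp add: \<rho>_def)
    have "hd (pref \<rho> M) = u" by (simp add: \<rho>_def u_def)
    then have hd: "hd (h @ [\<pi> m]) = u" by (simp only: hw)
    have comp': "compatible_minus owner (owner u) (T u) (pref \<rho> M)"
      unfolding compatible_minus_def
    proof (intro allI impI)
      fix k' assume k': "Suc k' < length (pref \<rho> M)" and o: "owner (pref \<rho> M ! k') \<noteq> owner u"
      then have k'M: "k' < M" by simp
      have nth: "pref \<rho> M ! k' = \<pi> (k + k')" using k'M by (simp add: \<rho>_def)
      have k'0: "k' \<noteq> 0"
      proof
        assume "k' = 0"
        with o nth show False by (simp add: u_def)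
      qed
      have "\<pi> (Suc (k + k')) = T (\<pi> k) (owner (\<pi> (k + k'))) (drop k (pref \<pi> (k + k')))"
      proof (rule S_compat[OF Pun])
        show "k < k + k'" using k'0 by simp
        show "k + k' < m" using k'M kM by simp
        show "owner (\<pi> (k + k')) \<noteq> owner (\<pi> k)" using o nth u_def by simp
      qed
      moreover have "drop k (pref \<pi> (k + k')) = take (Suc k') (pref \<rho> M)"
        using k'M by (simp add: drop_pref take_pref \<rho>_def)
      moreover have "pref \<rho> M ! Suc k' = \<pi> (Suc (k + k'))" using k'M by (simp add: \<rho>_def)
      ultimately show "pref \<rho> M ! Suc k' = T u (owner (pref \<rho> M ! k')) (take (Suc k') (pref \<rho> M))"
        using nth u_def by simp
    qed
    have comp: "compatible_minus owner (owner u) (T u) (h @ [\<pi> m])" using comp' hw by simp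
    have ne: "lamRat E owner \<mu> lam (owner u) u \<noteq> {}" using good[OF Pun] u_def by simp
    have lc: "lam_consistent owner \<mu> lam (outcome owner (restr (T u) h) (\<pi> m))"
      by (rule T_cons[OF ne hist hd comp])
    have dp: "drop k (pref \<pi> (m + t)) = h @ pref (suffix \<pi> m) t" for t
    proof -
      have "drop k (pref \<pi> (m + t)) = pref \<rho> (Suc (M - 1) + t)"
      proof -
        have ar: "m + t - k = Suc (M - 1) + t" using M1 kM by linarith
        have "drop k (pref \<pi> (m + t)) = pref \<rho> (m + t - k)" using km by (simp add: drop_pref \<rho>_def)
        then show ?thesis by (simp only: ar)
      qed
      also have "\<dots> = h @ pref (suffix \<rho> (Suc (M - 1))) t" by (simp only: pref_split h_def)
      also have "suffix \<rho> (Suc (M - 1)) = suffix \<pi> m" using M1 kM by (simp add: \<rho>_def)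
      finally show ?thesis .
    qed
    have eq: "outcome owner (restr (T u) h) (\<pi> m) = suffix \<pi> m"
    proof (rule outcome_unique)
      fix t
      have "suffix \<pi> m (Suc t) = presc (S \<pi> (m + t)) (pref \<pi> (m + t))" using fol[of "m + t"] by simp
      also have "\<dots> = presc (Pun k) (pref \<pi> (m + t))" using keep[of "m + t"] Pun by simp
      also have "\<dots> = T u (owner (\<pi> (m + t))) (drop k (pref \<pi> (m + t)))"
        using km by (simp add: presc_Pun u_def)
      also have "\<dots> = T u (owner (\<pi> (m + t))) (h @ pref (suffix \<pi> m) t)" by (simp only: dp)
      finally show "suffix \<pi> m (Suc t) = restr (T u) h (owner (suffix \<pi> m t)) (pref (suffix \<pi> m) t)"
        by (simp add: restr_def)
    qed simp
    from lc have "lam (suffix \<pi> m (n - m)) \<le> ereal (\<mu> (suffix (suffix \<pi> m) (n - m)) (owner (suffix \<pi> m (n - m))))"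
      unfolding eq lam_consistent_def by blast
    then show ?thesis using nm by simp
  qed
qed


lemma good:
  "is_play E \<pi> \<Longrightarrow> \<pi> 0 = v0 \<Longrightarrow> S \<pi> n = Pun k \<Longrightarrow> lamRat E owner \<mu> lam (owner (\<pi> k)) (\<pi> k) \<noteq> {}"
proof (induction n arbitrary: \<pi> k)
  case 0 then show ?case by simp
next
  case (Suc n)
  show ?case
  proof (cases "S \<pi> (Suc n) = S \<pi> n")
    case True then show ?thesis using Suc.IH[of \<pi> k] Suc.prems by simp
  next
    case False
    have kn: "k = n" using S_change[OF False] Suc.prems(3) by simp
    define h0 where "h0 = map \<pi> [0..<n]"
    have h0w: "h0 @ [\<pi> n] = pref \<pi> n" by (simp add: h0_def pref_def)
    define \<pi>' where "\<pi>' = conc h0 (outcome owner (restr sig h0) (\<pi> n))"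
    have hist: "is_hist E (h0 @ [\<pi> n])" using h0w hist_pref[OF Suc.prems(1)] by metis
    have len: "length h0 = n" by (simp add: h0_def)
    have pl: "is_play E \<pi>'" unfolding \<pi>'_def by (rule conc_play[OF sig_profile hist])
    have agree: "\<pi>' i = \<pi> i" if "i \<le> n" for i
    proof (cases "i < n")
      case True then show ?thesis using conc_lt[of i h0] len by (simp add: \<pi>'_def h0_def)
    next
      case False
      then have "i = length h0 + 0" using that len by simp
      then show ?thesis using conc_ge[of h0 _ 0] len by (simp add: \<pi>'_def)
    qed
    have p0: "\<pi>' 0 = v0" using agree[of 0] Suc.prems(2) by simp
    have fol: "\<pi>' (Suc n') = presc (S \<pi>' n') (pref \<pi>' n')" if "n' \<ge> n" for n'
      using conc_Suc[of h0 n' owner sig "\<pi> n"] that len by (simp add: \<pi>'_def sig_def nxt_pref)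
    have gd: "lamRat E owner \<mu> lam (owner (\<pi>' k')) (\<pi>' k') \<noteq> {}" if "S \<pi>' n = Pun k'" for k'
      using Suc.IH[OF pl p0 that] .
    have "lam (\<pi>' n) \<le> ereal (\<mu> (suffix \<pi>' n) (owner (\<pi>' n)))"
      by (rule consistent_follow[OF pl p0 fol gd]) auto
    then have "lam (\<pi> n) \<noteq> \<infinity>" using agree[of n] by auto
    then show ?thesis using nonempty kn by simp
  qed
qed

lemma xi_outcome: "outcome owner sig v0 = xi"
proof -
  have pI: "presc Init (pref xi n) = xi (Suc n)" for n
    using xi_play by (simp add: presc_def raw_def is_play_def)
  have SI: "S xi n = Init" for n
    by (induction n) (simp_all add: S_Suc pI)
  show ?thesis
  proof (rule outcome_unique)
    show "xi 0 = v0" by (rule xi0)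
    fix n show "xi (Suc n) = sig (owner (xi n)) (pref xi n)"
      by (simp add: sig_def nxt_pref SI pI)
  qed
qed


lemma spe:
  assumes hist: "is_hist E (h @ [v])" and hd0: "hd (h @ [v]) = v0" and str: "is_strategy E owner j \<sigma>'"
  shows "\<mu> (conc h (outcome owner (restr (sig(j := \<sigma>')) h) v)) j
           \<le> \<mu> (conc h (outcome owner (restr sig h) v)) j + \<epsilon>"
proof -
  define \<pi> where "\<pi> = conc h (outcome owner (restr sig h) v)"
  define \<pi>' where "\<pi>' = conc h (outcome owner (restr (sig(j := \<sigma>')) h) v)"
  have prof': "is_profile E owner (sig(j := \<sigma>'))" by (rule profile_upd[OF sig_profile str])
  have pl: "is_play E \<pi>" unfolding \<pi>_def by (rule conc_play[OF sig_profile hist])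
  have pl': "is_play E \<pi>'" unfolding \<pi>'_def by (rule conc_play[OF prof' hist])
  let ?m = "length h"
  have val: "\<pi> i = (h @ [v]) ! i \<and> \<pi>' i = (h @ [v]) ! i" if "i \<le> ?m" for i
  proof (cases "i < ?m")
    case True then show ?thesis using conc_lt[of i h] by (simp add: \<pi>_def \<pi>'_def nth_append)
  next
    case False
    then have "i = ?m + 0" using that by simp
    then show ?thesis using conc_ge[of h _ 0] by (simp add: \<pi>_def \<pi>'_def)
  qed
  have agree_m: "\<pi> i = \<pi>' i" if "i \<le> ?m" for i using val[OF that] by simp
  have p0: "\<pi> 0 = v0" using val[of 0] hd0 by (simp add: hd_conv_nth)
  have p0': "\<pi>' 0 = v0" using agree_m[of 0] p0 by simp
  have fol: "\<pi> (Suc n) = presc (S \<pi> n) (pref \<pi> n)" if "n \<ge> ?m" for n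
    using conc_Suc[OF that, of owner sig v] by (simp add: \<pi>_def sig_def nxt_pref)
  have fol': "\<pi>' (Suc n) = (if owner (\<pi>' n) = j then \<sigma>' (pref \<pi>' n) else presc (S \<pi>' n) (pref \<pi>' n))"
    if "n \<ge> ?m" for n
    using conc_Suc[OF that, of owner "sig(j := \<sigma>')" v] by (simp add: \<pi>'_def sig_def nxt_pref)
  have "\<mu> \<pi>' j \<le> \<mu> \<pi> j + \<epsilon>"
  proof (cases "\<pi> = \<pi>'")
    case True then show ?thesis using eps0 by simp
  next
    case False
    then obtain dd where "\<pi> dd \<noteq> \<pi>' dd" by auto
    define d0 where "d0 = (LEAST d. \<pi> d \<noteq> \<pi>' d)"
    have d0: "\<pi> d0 \<noteq> \<pi>' d0" unfolding d0_def by (rule LeastI) fact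
    have dmin: "\<pi> i = \<pi>' i" if "i < d0" for i
      using not_less_Least[of i "\<lambda>d. \<pi> d \<noteq> \<pi>' d"] that unfolding d0_def by blast
    have d0m: "d0 > ?m" using agree_m d0 by (meson not_less)
    define n1 where "n1 = d0 - 1"
    have d0eq: "d0 = Suc n1" using d0m by (simp add: n1_def)
    have n1m: "n1 \<ge> ?m" using d0m d0eq by simp
    have agr: "\<forall>i\<le>n1. \<pi> i = \<pi>' i" using dmin d0eq by simp
    have Sag: "S \<pi>' n1 = S \<pi> n1" using agr by (intro S_agree) simp
    have pag: "pref \<pi>' n1 = pref \<pi> n1" using agr by (intro pref_cong) simp
    have dev: "presc (S \<pi>' n1) (pref \<pi>' n1) \<noteq> \<pi>' (Suc n1)"
      using d0 fol[OF n1m] Sag pag d0eq by simp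
    have oj: "owner (\<pi> n1) = j"
    proof (rule ccontr)
      assume "owner (\<pi> n1) \<noteq> j"
      then have "\<pi>' (Suc n1) = presc (S \<pi>' n1) (pref \<pi>' n1)" using fol'[OF n1m] agr by simp
      with dev show False by simp
    qed
    define INV where "INV n \<longleftrightarrow> (\<exists>k. S \<pi>' n = Pun k \<and> owner (\<pi>' k) = j \<and> lam (\<pi>' k) \<le> lam (\<pi> n1))" for n
    define lev where "lev n = (case S \<pi>' n of Pun k \<Rightarrow> lam (\<pi>' k) | Init \<Rightarrow> \<infinity>)" for n
    have step: "INV (Suc n) \<and> lev (Suc n) \<le> lev n \<and> (S \<pi>' (Suc n) \<noteq> S \<pi>' n \<longrightarrow> lev (Suc n) < lev n)"
      if ns: "n \<ge> Suc n1" and inv: "INV n" for n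
    proof -
      obtain k where k: "S \<pi>' n = Pun k" "owner (\<pi>' k) = j" "lam (\<pi>' k) \<le> lam (\<pi> n1)"
        using inv unfolding INV_def by auto
      have kn: "k < n" using S_Pun[OF k(1)] by simp
      show ?thesis
      proof (cases "S \<pi>' (Suc n) = S \<pi>' n")
        case True then show ?thesis using k by (simp add: INV_def lev_def)
      next
        case False
        from S_change[OF False] have sc: "S \<pi>' (Suc n) = Pun n"
          and nd: "presc (S \<pi>' n) (pref \<pi>' n) \<noteq> \<pi>' (Suc n)" by auto
        have nm: "n \<ge> ?m" using ns n1m by simp
        have oj': "owner (\<pi>' n) = j"
        proof (rule ccontr)
          assume "owner (\<pi>' n) \<noteq> j"
          then have "\<pi>' (Suc n) = presc (S \<pi>' n) (pref \<pi>' n)" using fol'[OF nm] by simp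
          with nd show False by simp
        qed
        have "S \<pi>' (Suc n) = newst (Pun k) (pref \<pi>' n)" using nd k(1) by (simp add: S_Suc)
        then have "newst (Pun k) (pref \<pi>' n) = Pun n" using sc by simp
        then have "\<not> lam (\<pi>' k) \<le> lam (\<pi>' n)" using kn k(2) oj'
          by (auto simp: newst_def split: if_splits)
        then show ?thesis using sc k oj' by (auto simp: INV_def lev_def)
      qed
    qed
    have base: "INV (Suc n1)"
    proof -
      have sc: "S \<pi>' (Suc n1) = newst (S \<pi>' n1) (pref \<pi>' n1)" using dev by (simp add: S_Suc)
      have oj1: "owner (\<pi>' n1) = j" using oj agr by simp
      have l1: "lam (\<pi>' n1) = lam (\<pi> n1)" using agr by simp
      show ?thesis
      proof (cases "S \<pi>' n1")
        case Init
        then show ?thesis using sc oj1 l1 by (auto simp: INV_def newst_def)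
      next
        case (Pun k)
        have kn: "k < n1" using S_Pun[OF Pun] by simp
        then show ?thesis using sc Pun oj1 l1 by (auto simp: INV_def newst_def)
      qed
    qed
    have inv: "INV n" if "n \<ge> Suc n1" for n
      using that
    proof (induction n rule: dec_induct)
      case base show ?case by (rule \<open>INV (Suc n1)\<close>)
    next
      case (step n) then show ?case using \<open>\<And>n. \<lbrakk>n \<ge> Suc n1; INV n\<rbrakk> \<Longrightarrow> _\<close>[of n] by blast
    qed
    define f where "f n = card {x \<in> range lam. x < lev n}" for n
    have fmono: "f (Suc n) \<le> f n \<and> (S \<pi>' (Suc n) \<noteq> S \<pi>' n \<longrightarrow> f (Suc n) < f n)" if ns: "n \<ge> Suc n1" for n
    proof -
      have st: "lev (Suc n) \<le> lev n" "S \<pi>' (Suc n) \<noteq> S \<pi>' n \<longrightarrow> lev (Suc n) < lev n"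
        using step[OF ns inv[OF ns]] by auto
      have fin: "finite {x \<in> range lam. x < lev n}" by simp
      have 1: "f (Suc n) \<le> f n" unfolding f_def using st(1) fin
        by (intro card_mono) auto
      moreover have "f (Suc n) < f n" if ch: "S \<pi>' (Suc n) \<noteq> S \<pi>' n"
      proof -
        have lt: "lev (Suc n) < lev n" using st(2) ch by simp
        obtain k where "S \<pi>' (Suc n) = Pun k" using inv[of "Suc n"] ns unfolding INV_def by auto
        then have "lev (Suc n) \<in> range lam" by (simp add: lev_def)
        then have "{x \<in> range lam. x < lev (Suc n)} \<subset> {x \<in> range lam. x < lev n}"
          using lt st(1) by auto
        then show ?thesis unfolding f_def using fin by (rule psubset_card_mono[rotated])
      qed
      ultimately show ?thesis by auto
    qed
    obtain N where N: "N \<ge> Suc n1" and Nmin: "\<And>n. n \<ge> Suc n1 \<Longrightarrow> f N \<le> f n"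
      using ex_has_least_nat[of "\<lambda>n. n \<ge> Suc n1" "Suc n1" f] by auto
    have const: "S \<pi>' n = S \<pi>' N" if "n \<ge> N" for n
      using that
    proof (induction n rule: dec_induct)
      case base then show ?case by simp
    next
      case (step n)
      have fn: "f n = f N" using step.IH by (simp add: f_def lev_def)
      show ?case
      proof (rule ccontr)
        assume "S \<pi>' (Suc n) \<noteq> S \<pi>' N"
        then have "S \<pi>' (Suc n) \<noteq> S \<pi>' n" using step.IH by simp
        then have "f (Suc n) < f n" using fmono[of n] step.hyps N by auto
        moreover have "f N \<le> f (Suc n)" using Nmin N step.hyps by auto
        ultimately show False using fn by simp
      qed
    qed
    obtain K where K: "S \<pi>' N = Pun K" "owner (\<pi>' K) = j" "lam (\<pi>' K) \<le> lam (\<pi> n1)"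
      using inv[OF N] unfolding INV_def by auto
    have allK: "S \<pi>' n = Pun K" if "n > K" for n
    proof (cases "n \<le> N")
      case True then show ?thesis using S_Pun[OF K(1)] that by auto
    next
      case False then show ?thesis using const[of n] K(1) by auto
    qed
    define u where "u = \<pi>' K"
    define \<rho> where "\<rho> = suffix \<pi>' K"
    have comp: "\<rho> (Suc t) = T u (owner (\<rho> t)) (pref \<rho> t)" if ot: "owner (\<rho> t) \<noteq> j" for t
    proof -
      have t0: "t \<noteq> 0"
      proof
        assume "t = 0" with ot K(2) show False by (simp add: \<rho>_def)
      qed
      have "\<pi>' (Suc (K + t)) = T (\<pi>' K) (owner (\<pi>' (K + t))) (drop K (pref \<pi>' (K + t)))"
      proof (rule S_compat[OF allK[of "Suc (K + t)"]])
        show "K < Suc (K + t)" by simp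
        show "K < K + t" using t0 by simp
        show "K + t < Suc (K + t)" by simp
        show "owner (\<pi>' (K + t)) \<noteq> owner (\<pi>' K)" using ot K(2) by (simp add: \<rho>_def)
      qed
      then show ?thesis by (simp add: \<rho>_def u_def drop_pref)
    qed
    have plr: "is_play E \<rho>" unfolding \<rho>_def by (rule play_suffix[OF pl'])
    have bv: "ereal (\<mu> \<rho> j) \<le> best_value E owner \<mu> j u (T u)"
      using BV[where E=E and \<rho>=\<rho> and owner=owner and j=j and Q="T u" and \<mu>=\<mu>, OF edges plr comp] by (simp add: \<rho>_def u_def)
    have ne: "lamRat E owner \<mu> lam (owner u) u \<noteq> {}" using good[OF pl' p0' K(1)] u_def by simp
    have tb: "best_value E owner \<mu> j u (T u) \<le> lam u + ereal \<epsilon>" using T_best[OF ne] K(2) u_def by simp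
    have mr: "\<mu> \<rho> = \<mu> \<pi>'" using PI_suffix[OF pind pl'] \<rho>_def by simp
    have cons: "lam (\<pi> n1) \<le> ereal (\<mu> (suffix \<pi> n1) (owner (\<pi> n1)))"
      by (rule consistent_follow[OF pl p0 fol good[OF pl p0] n1m])
    have mp: "\<mu> (suffix \<pi> n1) = \<mu> \<pi>" using PI_suffix[OF pind pl] by simp
    have l2: "lam u \<le> ereal (\<mu> \<pi> j)" using K(3) cons oj mp u_def by simp
    have "ereal (\<mu> \<pi>' j) \<le> lam u + ereal \<epsilon>" using bv tb mr by simp
    also have "\<dots> \<le> ereal (\<mu> \<pi> j) + ereal \<epsilon>" using l2 by (rule add_right_mono)
    finally show ?thesis by simp
  qed
  then show ?thesis by (simp add: \<pi>_def \<pi>'_def)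
qed

theorem result: "eps_SPE E owner \<mu> \<epsilon> v0 sig \<and> outcome owner sig v0 = xi"
  unfolding eps_SPE_def using sig_profile spe xi_outcome by blast

end

theorem mainTheorem5:
  fixes E :: "('v::finite \<times> 'v) set"
    and owner :: "'v \<Rightarrow> 'p::finite"
    and \<mu> :: "(nat \<Rightarrow> 'v) \<Rightarrow> 'p \<Rightarrow> real"
    and v0 :: 'v and \<epsilon> :: real and lam :: "'v \<Rightarrow> ereal" and \<xi> :: "nat \<Rightarrow> 'v"
  assumes "game_edges E"
    and "well_initialized E v0"
    and "prefix_independent E \<mu>"
    and "steady_negotiation E owner \<mu>"
    and "\<epsilon> \<ge> 0"
    and "eps_fixed_point E owner \<mu> \<epsilon> lam"
    and "is_play E \<xi>" and "\<xi> 0 = v0" and "lam_consistent owner \<mu> lam \<xi>"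
  shows "\<exists>\<sigma>. eps_SPE E owner \<mu> \<epsilon> v0 \<sigma> \<and> outcome owner \<sigma> v0 = \<xi>"
proof -
  define dflt where "dflt h = (SOME w. (last h, w) \<in> E)" for h :: "'v list"
  have dflt_edge: "(last h, dflt h) \<in> E" for h
  proof -
    have "\<exists>w. (last h, w) \<in> E" using assms(1) unfolding game_edges_def by blast
    then show ?thesis unfolding dflt_def by (rule someI_ex)
  qed
  have dstr: "is_strategy E owner i dflt" for i using dflt_edge by (simp add: is_strategy_def)
  have "\<forall>u. \<exists>Tu. (\<forall>i. is_strategy E owner i (Tu i)) \<and>
      (lamRat E owner \<mu> lam (owner u) u \<noteq> {} \<longrightarrow>
        (\<forall>h w. is_hist E (h @ [w]) \<and> hd (h @ [w]) = u \<and> compatible_minus owner (owner u) Tu (h @ [w])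
           \<longrightarrow> lam_consistent owner \<mu> lam (outcome owner (restr Tu h) w)) \<and>
        best_value E owner \<mu> (owner u) u Tu \<le> lam u + ereal \<epsilon>)"
  proof
    fix u
    let ?i = "owner u"
    let ?R = "lamRat E owner \<mu> lam ?i u"
    show "\<exists>Tu. (\<forall>i. is_strategy E owner i (Tu i)) \<and>
      (?R \<noteq> {} \<longrightarrow>
        (\<forall>h w. is_hist E (h @ [w]) \<and> hd (h @ [w]) = u \<and> compatible_minus owner ?i Tu (h @ [w])
           \<longrightarrow> lam_consistent owner \<mu> lam (outcome owner (restr Tu h) w)) \<and>
        best_value E owner \<mu> ?i u Tu \<le> lam u + ereal \<epsilon>)"
    proof (cases "?R = {}")
      case True then show ?thesis using dstr by (intro exI[of _ "\<lambda>i. dflt"]) auto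
    next
      case False
      let ?Sv = "best_value E owner \<mu> ?i u ` ?R"
      have "?Sv = {} \<or> (\<exists>m\<in>?Sv. \<forall>x\<in>?Sv. m \<le> x)"
        using assms(4) unfolding steady_negotiation_def Let_def by blast
      then obtain mm where mm: "mm \<in> ?Sv" "\<forall>x\<in>?Sv. mm \<le> x" using False by blast
      obtain \<tau> where \<tau>: "\<tau> \<in> ?R" "mm = best_value E owner \<mu> ?i u \<tau>" using mm(1) by auto
      from \<tau>(1) obtain \<sigma>i where str: "\<forall>j. j \<noteq> ?i \<longrightarrow> is_strategy E owner j (\<tau> j)"
        and \<sigma>i: "is_strategy E owner ?i \<sigma>i"
        and cons: "\<forall>h w. is_hist E (h @ [w]) \<and> hd (h @ [w]) = u \<and> compatible_minus owner ?i \<tau> (h @ [w])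
                \<longrightarrow> lam_consistent owner \<mu> lam (outcome owner (restr (\<tau>(?i := \<sigma>i)) h) w)"
        unfolding lamRat_def by blast
      have infeq: "Inf ?Sv = mm"
      proof (rule antisym)
        show "Inf ?Sv \<le> mm" using mm(1) by (rule Inf_lower)
        show "mm \<le> Inf ?Sv" using mm(2) by (intro Inf_greatest) blast
      qed
      have nego: "nego E owner \<mu> lam u = mm" unfolding nego_def using infeq by simp
      have bvupd: "best_value E owner \<mu> ?i u (\<tau>(?i := \<sigma>i)) = best_value E owner \<mu> ?i u \<tau>"
        by (simp add: best_value_def)
      have compeq: "compatible_minus owner ?i (\<tau>(?i := \<sigma>i)) hw = compatible_minus owner ?i \<tau> hw" for hw
        by (simp add: compatible_minus_def)
      have fpv: "nego E owner \<mu> lam u \<le> lam u + ereal \<epsilon>"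
        using assms(6) unfolding eps_fixed_point_def by blast
      have allstr: "\<forall>i. is_strategy E owner i ((\<tau>(?i := \<sigma>i)) i)"
        using str \<sigma>i by auto
      show ?thesis
        apply (rule exI[of _ "\<tau>(?i := \<sigma>i)"])
        using allstr cons compeq bvupd \<tau>(2) nego fpv by auto
    qed
  qed
  then obtain T where T: "\<forall>u. (\<forall>i. is_strategy E owner i (T u i)) \<and>
      (lamRat E owner \<mu> lam (owner u) u \<noteq> {} \<longrightarrow>
        (\<forall>h w. is_hist E (h @ [w]) \<and> hd (h @ [w]) = u \<and> compatible_minus owner (owner u) (T u) (h @ [w])
           \<longrightarrow> lam_consistent owner \<mu> lam (outcome owner (restr (T u) h) w)) \<and>
        best_value E owner \<mu> (owner u) u (T u) \<le> lam u + ereal \<epsilon>)"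
    by metis
  interpret ctx E owner \<mu> \<epsilon> lam \<xi> v0 T dflt
  proof
    show "game_edges E" by (rule assms(1))
    show "prefix_independent E \<mu>" by (rule assms(3))
    show "0 \<le> \<epsilon>" by (rule assms(5))
    show "eps_fixed_point E owner \<mu> \<epsilon> lam" by (rule assms(6))
    show "is_play E \<xi>" by (rule assms(7))
    show "\<xi> 0 = v0" by (rule assms(8))
    show "lam_consistent owner \<mu> lam \<xi>" by (rule assms(9))
    show "\<And>h. h \<noteq> [] \<Longrightarrow> (last h, dflt h) \<in> E" using dflt_edge by blast
    show "\<And>u i. is_strategy E owner i (T u i)" using T by blast
    show "\<And>u h w. lamRat E owner \<mu> lam (owner u) u \<noteq> {} \<Longrightarrow> is_hist E (h @ [w]) \<Longrightarrow>
        hd (h @ [w]) = u \<Longrightarrow> compatible_minus owner (owner u) (T u) (h @ [w]) \<Longrightarrow>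
        lam_consistent owner \<mu> lam (outcome owner (restr (T u) h) w)" using T by blast
    show "\<And>u. lamRat E owner \<mu> lam (owner u) u \<noteq> {} \<Longrightarrow>
        best_value E owner \<mu> (owner u) u (T u) \<le> lam u + ereal \<epsilon>" using T by blast
  qed
  show ?thesis using result by blast
qed


end
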